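(* For every $A\in\mathbb R$, the kernel of the Mathieu–Hankel operator $\mathbf H(A)$ is trivial.
   Context: Fix $T>0$, $\omega=2\pi/T$. For $A\in\mathbb R$, $\mathbf H(A)$ is the bounded self-adjoint Hankel operator on $L^2(\mathbb R_+)$, $(\mathbf H(A)f)(t)=\int_0^\infty h_A(t+s)f(s)\,ds$, with $h_A(t)=p_A(\log t)/t$ and $p_A(\xi)=A+\operatorname{Re}\big(\Gamma(1-i\omega)e^{i\omega\xi}\big)$. *)

theory Defs
  imports "HOL-Analysis.Analysis"
begin

definition mh_omega :: "real \<Rightarrow> real" where
  "mh_omega T = 2 * pi / T"

definition mh_p :: "real \<Rightarrow> real \<Rightarrow> real \<Rightarrow> real" where
  "mh_p T A \<xi> = A + Re (Gamma (1 - \<i> * complex_of_real (mh_omega T))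
                         * exp (\<i> * complex_of_real (mh_omega T * \<xi>)))"

definition mh_h :: "real \<Rightarrow> real \<Rightarrow> real \<Rightarrow> real" where
  "mh_h T A t = mh_p T A (ln t) / t"

definition mh_hankel :: "real \<Rightarrow> real \<Rightarrow> (real \<Rightarrow> complex) \<Rightarrow> real \<Rightarrow> complex" where
  "mh_hankel T A f t = (LINT s:{0<..}|lborel. complex_of_real (mh_h T A (t + s)) * f s)"

definition L2_pos :: "(real \<Rightarrow> complex) \<Rightarrow> bool" where
  "L2_pos f \<longleftrightarrow> f \<in> borel_measurable lborel \<and>
     set_integrable lborel {0<..} (\<lambda>s. (cmod (f s))\<^sup>2)"

end

theory Submission
  imports Defs "HOL-Real_Asymp.Real_Asymp"
begin
lemma exp_pow_minus: "exp (-x) ^ k * exp (-x) = exp (-(real k + 1) * x)"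
  by (simp add: exp_of_nat_mult[symmetric] exp_add[symmetric] algebra_simps)

lemma laplace_poly_zero:
  fixes u :: "real \<Rightarrow> complex"
  assumes int: "\<And>n::nat. set_integrable lborel {0<..} (\<lambda>x. complex_of_real (exp (-(real n + 1) * x)) * u x)"
  and zero: "\<And>n::nat. (LINT x:{0<..}|lborel. complex_of_real (exp (-(real n + 1) * x)) * u x) = 0"
  defines "w \<equiv> \<lambda>x. indicator {0<..} x *\<^sub>R (complex_of_real (exp (-x)) * u x)"
  shows "\<And>k. integrable lborel (\<lambda>x. complex_of_real (exp (-x) ^ k) * w x)"
    and "\<And>k. (\<integral>x. complex_of_real (exp (-x) ^ k) * w x \<partial>lborel) = 0"
proof -
  fix k :: nat
  have eq: "(\<lambda>x. complex_of_real (exp (-x) ^ k) * w x) =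
     (\<lambda>x. indicator {0<..} x *\<^sub>R (complex_of_real (exp (-(real k + 1) * x)) * u x))"
  proof
    fix x
    have "complex_of_real (exp (-x) ^ k) * (complex_of_real (exp (-x)) * u x) = complex_of_real (exp (-(real k+1)*x)) * u x"
      by (simp only: mult.assoc[symmetric] of_real_mult[symmetric] exp_pow_minus)
    then show "complex_of_real (exp (-x) ^ k) * w x = indicator {0<..} x *\<^sub>R (complex_of_real (exp (-(real k + 1) * x)) * u x)"
      by (simp add: w_def)
  qed
  show "integrable lborel (\<lambda>x. complex_of_real (exp (-x) ^ k) * w x)"
    unfolding eq using int[of k] by (simp add: set_integrable_def)
  show "(\<integral>x. complex_of_real (exp (-x) ^ k) * w x \<partial>lborel) = 0"
    unfolding eq using zero[of k] by (simp add: set_lebesgue_integral_def)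
qed

lemma poly_moment_zero:
  fixes w :: "real \<Rightarrow> complex"
  assumes int: "\<And>k. integrable lborel (\<lambda>x. complex_of_real (exp (-x) ^ k) * w x)"
  and zero: "\<And>k. (\<integral>x. complex_of_real (exp (-x) ^ k) * w x \<partial>lborel) = 0"
  shows "integrable lborel (\<lambda>x. complex_of_real (\<Sum>i\<le>n. a i * exp (-x) ^ i) * w x)"
    and "(\<integral>x. complex_of_real (\<Sum>i\<le>n. a i * exp (-x) ^ i) * w x \<partial>lborel) = 0"
proof -
  have eq: "(\<lambda>x. complex_of_real (\<Sum>i\<le>n. a i * exp (-x) ^ i) * w x) =
      (\<lambda>x. \<Sum>i\<le>n. complex_of_real (a i) * (complex_of_real (exp (-x) ^ i) * w x))"
    by (rule ext) (simp add: sum_distrib_right mult.assoc)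
  show "integrable lborel (\<lambda>x. complex_of_real (\<Sum>i\<le>n. a i * exp (-x) ^ i) * w x)"
    unfolding eq using int by auto
  show "(\<integral>x. complex_of_real (\<Sum>i\<le>n. a i * exp (-x) ^ i) * w x \<partial>lborel) = 0"
    unfolding eq using int zero by (simp add: integral_sum)
qed

lemma cont_moment_zero:
  fixes w :: "real \<Rightarrow> complex" and \<phi> :: "real \<Rightarrow> real"
  assumes int: "\<And>k. integrable lborel (\<lambda>x. complex_of_real (exp (-x) ^ k) * w x)"
  and zero: "\<And>k. (\<integral>x. complex_of_real (exp (-x) ^ k) * w x \<partial>lborel) = 0"
  and wz: "\<And>x. x \<le> 0 \<Longrightarrow> w x = 0"
  and cont: "continuous_on UNIV \<phi>" and bnd: "\<And>y. \<bar>\<phi> y\<bar> \<le> B"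
  shows "integrable lborel (\<lambda>x. complex_of_real (\<phi> (exp (-x))) * w x)"
    and "(\<integral>x. complex_of_real (\<phi> (exp (-x))) * w x \<partial>lborel) = 0"
proof -
  have intw: "integrable lborel w" using int[of 0] by simp
  have measphi: "(\<lambda>x. complex_of_real (\<phi> (exp (-x)))) \<in> borel_measurable lborel"
  proof -
    have c: "continuous_on UNIV (\<lambda>x. \<phi> (exp (-x)))"
    proof (rule continuous_on_compose2[OF cont])
      show "continuous_on UNIV (\<lambda>x::real. exp (-x))" by (intro continuous_intros)
    qed auto
    have "(\<lambda>x. \<phi> (exp (-x))) \<in> borel_measurable borel"
      using c by (rule borel_measurable_continuous_onI)
    then show ?thesis by simp
  qed
  show intphi: "integrable lborel (\<lambda>x. complex_of_real (\<phi> (exp (-x))) * w x)"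
  proof (rule Bochner_Integration.integrable_bound[where f="\<lambda>x. B *\<^sub>R w x"])
    show "integrable lborel (\<lambda>x. B *\<^sub>R w x)" using intw by simp
    show "(\<lambda>x. complex_of_real (\<phi> (exp (-x))) * w x) \<in> borel_measurable lborel"
      using measphi intw by measurable
    show "AE x in lborel. norm (complex_of_real (\<phi> (exp (-x))) * w x) \<le> norm (B *\<^sub>R w x)"
    proof (rule AE_I2)
      fix x
      have "B \<ge> 0" using bnd[of 0] by simp
      then show "norm (complex_of_real (\<phi> (exp (-x))) * w x) \<le> norm (B *\<^sub>R w x)"
        using bnd[of "exp (-x)"] by (simp add: norm_mult mult_right_mono)
    qed
  qed
  define I where "I = (\<integral>x. complex_of_real (\<phi> (exp (-x))) * w x \<partial>lborel)"
  define C where "C = (\<integral>x. norm (w x) \<partial>lborel)"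
  have C0: "C \<ge> 0" unfolding C_def by simp
  have le: "norm I \<le> e * C" if e: "e > 0" for e
  proof -
    obtain g where g: "real_polynomial_function g" and ge: "\<And>x. x \<in> {0..1} \<Longrightarrow> \<bar>\<phi> x - g x\<bar> < e"
      using Stone_Weierstrass_real_polynomial_function[of "{0..1::real}" \<phi> e] cont e
      by (auto intro: continuous_on_subset)
    then obtain a n where gdef: "g = (\<lambda>x. \<Sum>i\<le>n. a i * x ^ i)"
      using real_polynomial_function_iff_sum by blast
    have intg: "integrable lborel (\<lambda>x. complex_of_real (g (exp (-x))) * w x)"
      and zg: "(\<integral>x. complex_of_real (g (exp (-x))) * w x \<partial>lborel) = 0"
      using poly_moment_zero[OF int zero, of a n] by (simp_all add: gdef)
    have "I = (\<integral>x. complex_of_real (\<phi> (exp (-x))) * w x - complex_of_real (g (exp (-x))) * w x \<partial>lborel)"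
      using intg intphi zg by (simp add: I_def)
    also have "\<dots> = (\<integral>x. complex_of_real (\<phi> (exp (-x)) - g (exp (-x))) * w x \<partial>lborel)"
      by (simp add: algebra_simps)
    finally have Ieq: "I = \<dots>" .
    have "norm I \<le> (\<integral>x. norm (complex_of_real (\<phi> (exp (-x)) - g (exp (-x))) * w x) \<partial>lborel)"
      unfolding Ieq by (rule integral_norm_bound)
    also have "\<dots> \<le> (\<integral>x. e * norm (w x) \<partial>lborel)"
    proof (rule integral_mono)
      show "integrable lborel (\<lambda>x. norm (complex_of_real (\<phi> (exp (-x)) - g (exp (-x))) * w x))"
        using Bochner_Integration.integrable_diff[OF intphi intg]
        by (simp add: algebra_simps)
      show "integrable lborel (\<lambda>x. e * norm (w x))" using intw by simp
      fix x
      show "norm (complex_of_real (\<phi> (exp (-x)) - g (exp (-x))) * w x) \<le> e * norm (w x)"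
      proof (cases "x \<le> 0")
        case True then show ?thesis using wz by simp
      next
        case False
        then have "exp (-x) \<in> {0..1}" by auto
        then have "\<bar>\<phi> (exp (-x)) - g (exp (-x))\<bar> \<le> e" using ge less_imp_le by blast
        then show ?thesis
          by (simp add: norm_mult mult_right_mono flip: of_real_diff)
      qed
    qed
    also have "\<dots> = e * C" by (simp add: C_def)
    finally show ?thesis .
  qed
  have "norm I \<le> 0"
  proof (rule field_le_epsilon)
    fix e :: real assume e: "e > 0"
    have "norm I \<le> (e / (C + 1)) * C" using le[of "e / (C+1)"] e C0 by simp
    also have "\<dots> \<le> e" using e C0 by (simp add: field_simps)
    finally show "norm I \<le> 0 + e" by simp
  qed
  then show "(\<integral>x. complex_of_real (\<phi> (exp (-x))) * w x \<partial>lborel) = 0"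
    by (simp add: I_def)
qed

lemma phi_lim:
  fixes \<alpha> \<beta> y :: real
  shows "(\<lambda>k. max 0 (1 - real k * (max 0 (\<alpha> - y) + max 0 (y - \<beta>)))) \<longlonglongrightarrow> indicator {\<alpha>..\<beta>} y"
proof (cases "y \<in> {\<alpha>..\<beta>}")
  case True
  then show ?thesis by simp
next
  case False
  define d where "d = max 0 (\<alpha> - y) + max 0 (y - \<beta>)"
  have d: "d > 0" using False by (auto simp: d_def)
  obtain N :: nat where N: "1 / d < N" using reals_Archimedean2 by blast
  have "eventually (\<lambda>k. max 0 (1 - real k * d) = 0) sequentially"
    unfolding eventually_sequentially
  proof (intro exI allI impI)
    fix k assume "N \<le> k"
    then have "1 / d < real k" using N by linarith
    then have "1 < real k * d" using d by (simp add: field_simps)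
    then show "max 0 (1 - real k * d) = 0" by simp
  qed
  then have "(\<lambda>k. max 0 (1 - real k * d)) \<longlonglongrightarrow> 0"
    by (rule tendsto_eventually)
  then show ?thesis using False by (simp add: d_def)
qed

lemma interval_zero:
  fixes w :: "real \<Rightarrow> complex"
  assumes int: "\<And>k. integrable lborel (\<lambda>x. complex_of_real (exp (-x) ^ k) * w x)"
  and zero: "\<And>k. (\<integral>x. complex_of_real (exp (-x) ^ k) * w x \<partial>lborel) = 0"
  and wz: "\<And>x. x \<le> 0 \<Longrightarrow> w x = 0"
  shows "(LINT x:{a..b}|lborel. w x) = 0"
proof -
  have intw: "integrable lborel w" using int[of 0] by simp
  define \<phi> where "\<phi> k y = max 0 (1 - real k * (max 0 (exp (-b) - y) + max 0 (y - exp (-a))))" for k :: nat and y :: real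
  have cont: "continuous_on UNIV (\<phi> k)" for k
    unfolding \<phi>_def by (intro continuous_intros)
  have bnd: "\<bar>\<phi> k y\<bar> \<le> 1" for k y
    unfolding \<phi>_def by (auto simp: max_def)
  have z: "(\<integral>x. complex_of_real (\<phi> k (exp (-x))) * w x \<partial>lborel) = 0"
    and ik: "integrable lborel (\<lambda>x. complex_of_real (\<phi> k (exp (-x))) * w x)" for k
    using cont_moment_zero[OF int zero wz cont bnd] by auto
  have ind: "indicator {exp (-b)..exp (-a)} (exp (-x)) = (indicator {a..b} x :: real)" for x
    by (auto simp: indicator_def)
  have lim: "(\<lambda>k. \<integral>x. complex_of_real (\<phi> k (exp (-x))) * w x \<partial>lborel) \<longlonglongrightarrow> (\<integral>x. indicator {a..b} x *\<^sub>R w x \<partial>lborel)"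
  proof (rule integral_dominated_convergence[where w="\<lambda>x. norm (w x)"])
    show "(\<lambda>x. indicator {a..b} x *\<^sub>R w x) \<in> borel_measurable lborel"
      using intw by measurable
    show "(\<lambda>x. complex_of_real (\<phi> k (exp (-x))) * w x) \<in> borel_measurable lborel" for k
      using ik[of k] by (rule borel_measurable_integrable)
    show "integrable lborel (\<lambda>x. norm (w x))" using intw by simp
    show "AE x in lborel. (\<lambda>k. complex_of_real (\<phi> k (exp (-x))) * w x) \<longlonglongrightarrow> indicator {a..b} x *\<^sub>R w x"
    proof (rule AE_I2)
      fix x
      have "(\<lambda>k. \<phi> k (exp (-x))) \<longlonglongrightarrow> indicator {a..b} x"
        unfolding \<phi>_def ind[symmetric] by (rule phi_lim)
      then have "(\<lambda>k. complex_of_real (\<phi> k (exp (-x))) * w x) \<longlonglongrightarrow> complex_of_real (indicator {a..b} x) * w x"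
        by (intro tendsto_intros)
      then show "(\<lambda>k. complex_of_real (\<phi> k (exp (-x))) * w x) \<longlonglongrightarrow> indicator {a..b} x *\<^sub>R w x"
        by (simp add: scaleR_conv_of_real)
    qed
    show "AE x in lborel. norm (complex_of_real (\<phi> k (exp (-x))) * w x) \<le> norm (w x)" for k
    proof (rule AE_I2)
      fix x show "norm (complex_of_real (\<phi> k (exp (-x))) * w x) \<le> norm (w x)"
        using bnd[of k "exp (-x)"] by (simp add: norm_mult mult_left_le_one_le)
    qed
  qed
  then show ?thesis unfolding z set_lebesgue_integral_def
    using LIMSEQ_unique tendsto_const by metis
qed

lemma borel_zero:
  fixes w :: "real \<Rightarrow> complex"
  assumes int: "\<And>k. integrable lborel (\<lambda>x. complex_of_real (exp (-x) ^ k) * w x)"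
  and zero: "\<And>k. (\<integral>x. complex_of_real (exp (-x) ^ k) * w x \<partial>lborel) = 0"
  and wz: "\<And>x. x \<le> 0 \<Longrightarrow> w x = 0"
  shows "AE x in lborel. w x = 0"
proof (rule sigma_finite_measure.density_zero[OF lborel.sigma_finite_measure_axioms])
  have intw: "integrable lborel w" using int[of 0] by simp
  then show "integrable lborel w" .
  have w0: "(\<integral>x. w x \<partial>lborel) = 0" using zero[of 0] by simp
  fix A :: "real set" assume "A \<in> sets lborel"
  then have "A \<in> sets borel" by simp
  then show "set_lebesgue_integral lborel A w = 0"
  proof (induction rule: borel_set_induct)
    case empty
    then show ?case by (simp add: set_lebesgue_integral_def)
  next
    case (interval a b)
    then show ?case using interval_zero[OF int zero wz] by simp
  next
    case (compl A)
    have "set_lebesgue_integral lborel (-A) w = (\<integral>x. w x - indicator A x *\<^sub>R w x \<partial>lborel)"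
      unfolding set_lebesgue_integral_def
      by (intro Bochner_Integration.integral_cong) (auto simp: indicator_def)
    also have "\<dots> = (\<integral>x. w x \<partial>lborel) - set_lebesgue_integral lborel A w"
      unfolding set_lebesgue_integral_def
      using compl intw by (intro Bochner_Integration.integral_diff integrable_mult_indicator) auto
    finally show ?case using compl w0 by simp
  next
    case (union f)
    have "set_lebesgue_integral lborel (\<Union>i. f i) w = (\<Sum>i. set_lebesgue_integral lborel (f i) w)"
    proof (rule lebesgue_integral_countable_add)
      show "f i \<in> sets lborel" for i using union by simp
      show "f i \<inter> f j = {}" if "i \<noteq> j" for i j using union(1) that by (auto simp: disjoint_family_on_def)
      show "set_integrable lborel (\<Union>i. f i) w"
        unfolding set_integrable_def using union intw
        by (intro integrable_mult_indicator) auto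
    qed
    then show ?case using union by simp
  qed
qed

lemma laplace_unique:
  fixes u :: "real \<Rightarrow> complex"
  assumes int: "\<And>n::nat. set_integrable lborel {0<..} (\<lambda>x. complex_of_real (exp (-(real n + 1) * x)) * u x)"
  and zero: "\<And>n::nat. (LINT x:{0<..}|lborel. complex_of_real (exp (-(real n + 1) * x)) * u x) = 0"
  shows "AE x in lborel. x > 0 \<longrightarrow> u x = 0"
proof -
  define w where "w \<equiv> \<lambda>x. indicator {0<..} x *\<^sub>R (complex_of_real (exp (-x)) * u x)"
  have i1: "\<And>k. integrable lborel (\<lambda>x. complex_of_real (exp (-x) ^ k) * w x)"
    unfolding w_def by (rule laplace_poly_zero(1)[OF int zero])
  have z1: "\<And>k. (\<integral>x. complex_of_real (exp (-x) ^ k) * w x \<partial>lborel) = 0"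
    unfolding w_def by (rule laplace_poly_zero(2)[OF int zero])
  have "AE x in lborel. w x = 0"
    by (rule borel_zero[OF i1 z1]) (simp add: w_def)
  then show ?thesis
    by (rule AE_mp) (auto simp: w_def intro!: AE_I2)
qed

lemma laplace_ae_point:
  fixes v :: "real \<Rightarrow> complex"
  assumes int: "\<And>c. c > 0 \<Longrightarrow> set_integrable lborel {0<..} (\<lambda>s. complex_of_real (exp (- c * s)) * v s)"
  and ae: "AE t in lborel. t > 0 \<longrightarrow> (LINT s:{0<..}|lborel. complex_of_real (exp (- t * s)) * v s) = 0"
  and t0: "t0 > 0"
  shows "(LINT s:{0<..}|lborel. complex_of_real (exp (- t0 * s)) * v s) = 0"
proof -
  define L where "L t = (LINT s:{0<..}|lborel. complex_of_real (exp (- t * s)) * v s)" for t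
  have ex: "\<exists>t. t0 < t \<and> t < t0 + 1 / (real k + 1) \<and> L t = 0" for k :: nat
  proof (rule ccontr)
    assume nex: "\<not> ?thesis"
    define I where "I = {t0<..<t0 + 1 / (real k + 1)}"
    have "AE t in lborel. t \<notin> I"
      using ae by (rule AE_mp) (use nex t0 in \<open>auto simp: I_def L_def intro!: AE_I2\<close>)
    then have "I \<in> null_sets lborel"
      by (subst AE_iff_null_sets) (auto simp: I_def)
    moreover have "emeasure lborel I = ennreal (1 / (real k + 1))"
      by (simp add: I_def)
    ultimately have "ennreal (1 / (real k + 1)) = 0" by (simp add: null_sets_def)
    then show False by (simp add: add_pos_nonneg)
  qed
  then obtain tk where tk: "\<And>k. t0 < tk k \<and> tk k < t0 + 1 / (real k + 1) \<and> L (tk k) = 0"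
    by metis
  have lim_tk: "tk \<longlonglongrightarrow> t0"
  proof (rule tendsto_sandwich[where f="\<lambda>_. t0" and h="\<lambda>k. t0 + 1 / (real k + 1)"])
    show "\<forall>\<^sub>F n in sequentially. t0 \<le> tk n" using tk by (intro always_eventually allI less_imp_le) blast
    show "\<forall>\<^sub>F n in sequentially. tk n \<le> t0 + 1 / (real n + 1)" using tk by (intro always_eventually allI less_imp_le) blast
    show "(\<lambda>k. t0 + 1 / (real k + 1)) \<longlonglongrightarrow> t0" by real_asymp
  qed simp
  have intt0: "integrable lborel (\<lambda>x. indicator {0<..} x *\<^sub>R (complex_of_real (exp (- t0 * x)) * v x))"
    using int[OF t0] by (simp add: set_integrable_def)
  have intk: "integrable lborel (\<lambda>x. indicator {0<..} x *\<^sub>R (complex_of_real (exp (- tk k * x)) * v x))" for k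
    using int[of "tk k"] tk[of k] t0 by (simp add: set_integrable_def)
  have "(\<lambda>k. \<integral>x. indicator {0<..} x *\<^sub>R (complex_of_real (exp (- tk k * x)) * v x) \<partial>lborel)
      \<longlonglongrightarrow> (\<integral>x. indicator {0<..} x *\<^sub>R (complex_of_real (exp (- t0 * x)) * v x) \<partial>lborel)"
  proof (rule integral_dominated_convergence[where w="\<lambda>x. norm (indicator {0<..} x *\<^sub>R (complex_of_real (exp (- t0 * x)) * v x))"])
    show "(\<lambda>x. indicator {0<..} x *\<^sub>R (complex_of_real (exp (- t0 * x)) * v x)) \<in> borel_measurable lborel"
      using intt0 by (rule borel_measurable_integrable)
    show "(\<lambda>x. indicator {0<..} x *\<^sub>R (complex_of_real (exp (- tk k * x)) * v x)) \<in> borel_measurable lborel" for k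
      using intk[of k] by (rule borel_measurable_integrable)
    show "integrable lborel (\<lambda>x. norm (indicator {0<..} x *\<^sub>R (complex_of_real (exp (- t0 * x)) * v x)))"
      using integrable_norm[OF intt0] .
    show "AE x in lborel. (\<lambda>k. indicator {0<..} x *\<^sub>R (complex_of_real (exp (- tk k * x)) * v x))
        \<longlonglongrightarrow> indicator {0<..} x *\<^sub>R (complex_of_real (exp (- t0 * x)) * v x)"
      by (intro AE_I2 tendsto_intros lim_tk)
    show "AE x in lborel. norm (indicator {0<..} x *\<^sub>R (complex_of_real (exp (- tk k * x)) * v x))
        \<le> norm (indicator {0<..} x *\<^sub>R (complex_of_real (exp (- t0 * x)) * v x))" for k
    proof (rule AE_I2)
      fix x :: real
      show "norm (indicator {0<..} x *\<^sub>R (complex_of_real (exp (- tk k * x)) * v x))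
        \<le> norm (indicator {0<..} x *\<^sub>R (complex_of_real (exp (- t0 * x)) * v x))"
      proof (cases "x > 0")
        case True
        have "exp (- tk k * x) \<le> exp (- t0 * x)" using True tk[of k] by (simp add: mult_right_mono)
        then show ?thesis using True by (simp add: norm_mult mult_right_mono)
      qed (simp add: indicator_def)
    qed
  qed
  then have "(\<lambda>k. L (tk k)) \<longlonglongrightarrow> L t0" by (simp add: L_def set_lebesgue_integral_def)
  moreover have "(\<lambda>k. L (tk k)) = (\<lambda>k. 0)" using tk by auto
  ultimately have "L t0 = 0" using LIMSEQ_unique tendsto_const by metis
  then show ?thesis by (simp add: L_def)
qed

lemma sigma_ae_nonzero:
  fixes A \<omega> :: real
  assumes "\<omega> \<noteq> 0"
  shows "AE x in lborel. x > 0 \<longrightarrow> A + cos (\<omega> * ln x) \<noteq> 0"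
proof -
  define g where "g = (\<lambda>(n::int, b::bool). exp (((if b then arccos (-A) else - arccos (-A)) + 2 * of_int n * pi) / \<omega>))"
  have sub: "{x. x > 0 \<and> A + cos (\<omega> * ln x) = 0} \<subseteq> range g"
  proof
    fix x assume "x \<in> {x. x > 0 \<and> A + cos (\<omega> * ln x) = 0}"
    then have x: "x > 0" and c: "cos (\<omega> * ln x) = -A" by auto
    have "-1 \<le> -A" "-A \<le> 1" using c[symmetric] cos_ge_minus_one cos_le_one by metis+
    then have "cos (\<omega> * ln x) = cos (arccos (-A))" using c by (simp add: cos_arccos)
    then obtain n where n: "n \<in> \<int>" and
      ncase: "\<omega> * ln x = arccos (-A) + 2*n*pi \<or> \<omega> * ln x = - arccos (-A) + 2*n*pi"
      by (auto simp: cos_eq)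
    obtain m where m: "n = of_int m" using n Ints_cases by blast
    have lnx: "ln x = (\<omega> * ln x) / \<omega>" using assms by simp
    show "x \<in> range g"
    proof (cases "\<omega> * ln x = arccos (-A) + 2*n*pi")
      case True
      have "ln x = (arccos (-A) + 2 * of_int m * pi) / \<omega>" using lnx True m by simp
      then have "x = exp ((arccos (-A) + 2 * of_int m * pi) / \<omega>)" using x by (metis exp_ln)
      then have "x = g (m, True)" by (simp add: g_def)
      then show ?thesis by blast
    next
      case False
      then have F: "\<omega> * ln x = - arccos (-A) + 2*n*pi" using ncase by blast
      have "ln x = (- arccos (-A) + 2 * of_int m * pi) / \<omega>" using lnx F m by simp
      then have "x = exp ((- arccos (-A) + 2 * of_int m * pi) / \<omega>)" using x by (metis exp_ln)
      then have "x = g (m, False)" by (simp add: g_def)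
      then show ?thesis by blast
    qed
  qed
  have "countable (range g)" by simp
  then have "countable {x. x > 0 \<and> A + cos (\<omega> * ln x) = 0}" using sub countable_subset by blast
  then have "{x. x > 0 \<and> A + cos (\<omega> * ln x) = 0} \<in> null_sets lborel"
    by (rule countable_imp_null_set_lborel)
  then have "AE x in lborel. x \<notin> {x. x > 0 \<and> A + cos (\<omega> * ln x) = 0}"
    by (rule AE_not_in)
  then show ?thesis by (rule AE_mp) (auto intro!: AE_I2)
qed

lemma laplace_powr:
  fixes \<omega> a :: real
  assumes a: "a > 0"
  defines "r \<equiv> \<lambda>l. indicator {0<..} l *\<^sub>R (exp (-(\<i> * of_real \<omega>) * of_real (ln l)) * of_real (exp (-a*l)))"
  shows "integrable lborel r"
    and "(\<integral>l. r l \<partial>lborel) = Gamma (1 - \<i> * of_real \<omega>) * exp (\<i> * of_real (\<omega> * ln a)) / of_real a"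
proof -
  define z where "z = 1 - \<i> * of_real \<omega>"
  have Rez: "Re z > 0" by (simp add: z_def)
  define q where "q u = indicator {0<..} u *\<^sub>R (exp (-(\<i> * of_real \<omega>) * of_real (ln u)) / of_real (exp u))" for u :: real
  have gi: "set_integrable lebesgue {0<..} (\<lambda>u. of_real u powr (z - 1) / of_real (exp u))"
    using absolutely_integrable_Gamma_integral'[OF Rez] .
  have gv: "(LINT u:{0<..}|lebesgue. of_real u powr (z - 1) / of_real (exp u)) = Gamma z"
    using set_lebesgue_integral_eq_integral(2)[OF gi] integral_unique[OF Gamma_integral_complex'[OF Rez]]
    by simp
  have qeq: "(\<lambda>u. indicator {0<..} u *\<^sub>R (of_real u powr (z - 1) / of_real (exp u))) = q"
  proof
    fix u :: real
    show "indicator {0<..} u *\<^sub>R (of_real u powr (z - 1) / of_real (exp u)) = q u"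
    proof (cases "u > 0")
      case True
      then show ?thesis by (simp add: q_def z_def powr_def Ln_of_real)
    qed (simp add: q_def)
  qed
  have qmeas: "q \<in> borel_measurable lborel"
    unfolding q_def by measurable
  have qi: "integrable lborel q"
    using gi qmeas unfolding set_integrable_def qeq by (simp add: integrable_completion)
  have qv: "(\<integral>u. q u \<partial>lborel) = Gamma z"
    using gv qmeas unfolding set_lebesgue_integral_def qeq by (simp add: integral_completion)
  define c where "c = exp (-(\<i> * of_real \<omega>) * of_real (ln a))"
  have c0: "c \<noteq> 0" by (simp add: c_def)
  have qa: "q (0 + a * l) = c * r l" for l
  proof (cases "l > 0")
    case True
    then have "ln (a * l) = ln a + ln l" using a by (simp add: ln_mult)
    moreover have "exp (-a*l) = 1 / exp (a * l)" by (simp add: exp_minus field_simps)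
    ultimately show ?thesis using True a
      apply (simp add: q_def r_def c_def exp_add[symmetric] algebra_simps exp_of_real[symmetric] mult_exp_exp)
      apply (simp add: exp_diff[symmetric] algebra_simps)
      apply (rule arg_cong[where f=exp])
      apply (simp add: algebra_simps)
      done
  next
    case False
    then show ?thesis using a by (simp add: q_def r_def zero_less_mult_iff)
  qed
  have "integrable lborel (\<lambda>l. q (0 + a * l))"
    using qi a by (subst lborel_integrable_real_affine_iff) auto
  then have "integrable lborel (\<lambda>l. c * r l)" unfolding qa .
  then have "integrable lborel (\<lambda>l. inverse c * (c * r l))" by (rule integrable_mult_right)
  then show ri: "integrable lborel r" using c0 by (simp add: mult.assoc[symmetric])
  have "Gamma z = a *\<^sub>R (\<integral>l. q (0 + a * l) \<partial>lborel)"
    using qv lborel_integral_real_affine[of a q 0] a by simp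
  also have "\<dots> = of_real a * c * (\<integral>l. r l \<partial>lborel)"
    unfolding qa by (simp add: scaleR_conv_of_real)
  finally have "(\<integral>l. r l \<partial>lborel) = Gamma z / (of_real a * c)"
    using c0 a by (simp add: field_simps)
  also have "\<dots> = Gamma z * exp (\<i> * of_real (\<omega> * ln a)) / of_real a"
    using a by (simp add: c_def field_simps exp_minus)
  finally show "(\<integral>l. r l \<partial>lborel) = Gamma (1 - \<i> * of_real \<omega>) * exp (\<i> * of_real (\<omega> * ln a)) / of_real a"
    by (simp add: z_def)
qed

lemma exp_laplace:
  fixes a :: real
  assumes a: "a > 0"
  shows "integrable lborel (\<lambda>l. indicator {0<..} l * exp (-a*l))"
    and "(\<integral>l. indicator {0<..} l * exp (-a*l) \<partial>lborel) = 1 / a"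
proof -
  have eq: "(\<lambda>l. indicator {0<..} l *\<^sub>R (exp (-(\<i> * of_real 0) * of_real (ln l)) * of_real (exp (-a*l))))
      = (\<lambda>l. complex_of_real (indicator {0<..} l * exp (-a*l)))"
    by (rule ext) (simp add: scaleR_conv_of_real)
  have i: "integrable lborel (\<lambda>l. complex_of_real (indicator {0<..} l * exp (-a*l)))"
    using laplace_powr(1)[OF a, of 0] unfolding eq .
  then show "integrable lborel (\<lambda>l. indicator {0<..} l * exp (-a*l))"
    using complex_of_real_integrable_eq by blast
  have "(\<integral>l. complex_of_real (indicator {0<..} l * exp (-a*l)) \<partial>lborel) = 1 / of_real a"
    using laplace_powr(2)[OF a, of 0] unfolding eq by simp
  then show "(\<integral>l. indicator {0<..} l * exp (-a*l) \<partial>lborel) = 1 / a"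
    by (metis integral_complex_of_real of_real_1 of_real_divide of_real_eq_iff)
qed

lemma kernel_repr:
  fixes a A \<omega> :: real
  assumes a: "a > 0"
  shows "integrable lborel (\<lambda>l. indicator {0<..} l * (exp (-a*l) * (A + cos (\<omega> * ln l))))"
    and "(\<integral>l. indicator {0<..} l * (exp (-a*l) * (A + cos (\<omega> * ln l))) \<partial>lborel)
         = (A + Re (Gamma (1 - \<i> * of_real \<omega>) * exp (\<i> * of_real (\<omega> * ln a)))) / a"
proof -
  define r where "r \<equiv> \<lambda>l. indicator {0<..} l *\<^sub>R (exp (-(\<i> * of_real \<omega>) * of_real (ln l)) * of_real (exp (-a*l)))"
  have ri: "integrable lborel r" and rv: "(\<integral>l. r l \<partial>lborel) = Gamma (1 - \<i> * of_real \<omega>) * exp (\<i> * of_real (\<omega> * ln a)) / of_real a"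
    using laplace_powr[OF a, of \<omega>] by (simp_all add: r_def)
  have Rer: "Re (r l) = indicator {0<..} l * (exp (-a*l) * cos (\<omega> * ln l))" for l
    by (simp add: r_def Re_exp)
  have i1: "integrable lborel (\<lambda>l. indicator {0<..} l * (exp (-a*l) * cos (\<omega> * ln l)))"
    using integrable_Re[OF ri] unfolding Rer .
  have v1: "(\<integral>l. indicator {0<..} l * (exp (-a*l) * cos (\<omega> * ln l)) \<partial>lborel)
      = Re (Gamma (1 - \<i> * of_real \<omega>) * exp (\<i> * of_real (\<omega> * ln a))) / a"
    using integral_Re[OF ri] unfolding Rer rv by (simp add: Re_divide_of_real)
  have i0: "integrable lborel (\<lambda>l. A * (indicator {0<..} l * exp (-a*l)))"
    using exp_laplace(1)[OF a] by simp
  have eq: "(\<lambda>l. indicator {0<..} l * (exp (-a*l) * (A + cos (\<omega> * ln l)))) =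
      (\<lambda>l. A * (indicator {0<..} l * exp (-a*l)) + indicator {0<..} l * (exp (-a*l) * cos (\<omega> * ln l)))"
    by (rule ext) (simp add: algebra_simps)
  show "integrable lborel (\<lambda>l. indicator {0<..} l * (exp (-a*l) * (A + cos (\<omega> * ln l))))"
    unfolding eq using i0 i1 by simp
  show "(\<integral>l. indicator {0<..} l * (exp (-a*l) * (A + cos (\<omega> * ln l))) \<partial>lborel)
         = (A + Re (Gamma (1 - \<i> * of_real \<omega>) * exp (\<i> * of_real (\<omega> * ln a)))) / a"
    unfolding eq using i0 i1 v1 exp_laplace(2)[OF a] by (simp add: add_divide_distrib)
qed

lemma inv_sq_integrable:
  fixes t :: real
  assumes t: "t > 0"
  shows "integrable lborel (\<lambda>s. indicator {0<..} s * (1 / (t + s)^2))"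
proof -
  define g where "g x = indicator {t..} x * (1 / x^2)" for x :: real
  have hi: "((\<lambda>x. 1 / x ^ 2) has_integral 1 / (real (2 - 1) * t ^ (2 - 1))) {t..}"
    using has_integral_inverse_power_to_inf[of 2 t] t by simp
  have "integral\<^sup>N lborel (\<lambda>x. indicator {t..} x * (1 / x^2)) = 1 / (real (2 - 1) * t ^ (2 - 1))"
    by (rule nn_integral_has_integral_lebesgue[OF _ hi]) simp
  then have gi: "integrable lborel g"
    unfolding g_def by (intro integrableI_nn_integral_finite) (auto simp: indicator_def)
  have "integrable lborel (\<lambda>s. g (t + 1 * s))"
    using gi by (subst lborel_integrable_real_affine_iff) auto
  moreover have "(\<lambda>s. g (t + 1 * s)) = (\<lambda>s. indicator {0..} s * (1 / (t + s)^2))"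
    by (rule ext) (auto simp: g_def indicator_def)
  ultimately have i0: "integrable lborel (\<lambda>s. indicator {0..} s * (1 / (t + s)^2))" by simp
  show ?thesis
  proof (rule Bochner_Integration.integrable_bound[OF i0])
    show "(\<lambda>s. indicator {0<..} s * (1 / (t + s)^2)) \<in> borel_measurable lborel" by measurable
    show "AE x in lborel. norm (indicator {0<..} x * (1 / (t + x)^2)) \<le> norm (indicator {0..} x * (1 / (t + x)^2) :: real)"
      by (intro AE_I2) (auto simp: indicator_def)
  qed
qed

lemma L2_exp_integrable:
  fixes f :: "real \<Rightarrow> complex" and c :: real
  assumes fm: "f \<in> borel_measurable lborel"
    and f2: "integrable lborel (\<lambda>s. indicator {0<..} s * (cmod (f s))^2)"
    and c: "c > 0"
  shows "set_integrable lborel {0<..} (\<lambda>s. complex_of_real (exp (- c * s)) * f s)"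
  unfolding set_integrable_def
proof (rule Bochner_Integration.integrable_bound)
  have e: "integrable lborel (\<lambda>l. indicator {0<..} l * exp (- (2*c) * l))"
    using exp_laplace(1)[of "2*c"] c by simp
  show "integrable lborel (\<lambda>s. indicator {0<..} s * exp (- (2*c) * s) + indicator {0<..} s * (cmod (f s))^2)"
    using e f2 by simp
  show "(\<lambda>s. indicator {0<..} s *\<^sub>R (complex_of_real (exp (- c * s)) * f s)) \<in> borel_measurable lborel"
    using fm by measurable
  show "AE s in lborel. norm (indicator {0<..} s *\<^sub>R (complex_of_real (exp (- c * s)) * f s))
     \<le> norm (indicator {0<..} s * exp (- (2*c) * s) + indicator {0<..} s * (cmod (f s))^2)"
  proof (rule AE_I2)
    fix s :: real
    have "exp (- c * s) * cmod (f s) \<le> exp (- c * s)^2 + (cmod (f s))^2"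
    proof -
      have "2 * exp (- c * s) * cmod (f s) \<le> exp (- c * s)^2 + (cmod (f s))^2"
        by (rule sum_squares_bound)
      moreover have "0 \<le> exp (- c * s) * cmod (f s)" by simp
      ultimately show ?thesis by linarith
    qed
    also have "exp (- c * s)^2 = exp (- (2*c) * s)"
      by (simp add: power2_eq_square exp_add[symmetric])
    finally have "exp (- c * s) * cmod (f s) \<le> exp (- (2*c) * s) + (cmod (f s))^2" .
    then show "norm (indicator {0<..} s *\<^sub>R (complex_of_real (exp (- c * s)) * f s))
     \<le> norm (indicator {0<..} s * exp (- (2*c) * s) + indicator {0<..} s * (cmod (f s))^2)"
      by (cases "s > 0") (simp_all add: indicator_def norm_mult)
  qed
qed

lemma fubini_step:
  fixes f :: "real \<Rightarrow> complex" and t A \<omega> :: real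
  assumes fm: "f \<in> borel_measurable lborel"
    and f2: "integrable lborel (\<lambda>s. indicator {0<..} s * (cmod (f s))^2)"
    and t: "t > 0"
  defines "F \<equiv> \<lambda>l. LINT s:{0<..}|lborel. complex_of_real (exp (- l * s)) * f s"
  defines "H \<equiv> \<lambda>x. (A + Re (Gamma (1 - \<i> * of_real \<omega>) * exp (\<i> * of_real (\<omega> * ln x)))) / x"
  shows "set_integrable lborel {0<..} (\<lambda>l. complex_of_real (exp (- t * l)) * (complex_of_real (A + cos (\<omega> * ln l)) * F l))"
    and "(LINT l:{0<..}|lborel. complex_of_real (exp (- t * l)) * (complex_of_real (A + cos (\<omega> * ln l)) * F l))
         = (LINT s:{0<..}|lborel. complex_of_real (H (t + s)) * f s)"
proof -
  define \<sigma> where "\<sigma> l = A + cos (\<omega> * ln l)" for l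
  define K where "K s l = indicator {0<..} s *\<^sub>R (indicator {0<..} l *\<^sub>R
      (complex_of_real (exp (- (t + s) * l) * \<sigma> l) * f s))" for s l
  have fb[measurable]: "f \<in> borel_measurable borel" using fm by simp
  have Km: "(\<lambda>(s, l). K s l) \<in> borel_measurable (lborel \<Otimes>\<^sub>M lborel)"
    unfolding K_def \<sigma>_def by measurable
  have bound: "norm (K s l) \<le> indicator {0<..} s * ((\<bar>A\<bar> + 1) * cmod (f s)) * (indicator {0<..} l * exp (- (t + s) * l))" for s l
  proof -
    have "\<bar>\<sigma> l\<bar> \<le> \<bar>A\<bar> + 1" unfolding \<sigma>_def using abs_cos_le_one[of "\<omega> * ln l"] by linarith
    then have "exp (- (t + s) * l) * \<bar>\<sigma> l\<bar> * cmod (f s) \<le> exp (- (t + s) * l) * (\<bar>A\<bar> + 1) * cmod (f s)"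
      by (intro mult_right_mono mult_left_mono) auto
    then show ?thesis by (simp add: K_def indicator_def norm_mult abs_mult mult_ac)
  qed
  have inner: "(\<integral>\<^sup>+ l. ennreal (norm (K s l)) \<partial>lborel) \<le>
      ennreal ((\<bar>A\<bar> + 1) * (indicator {0<..} s * (cmod (f s))^2 + indicator {0<..} s * (1 / (t + s)^2)))" for s
  proof (cases "s > 0")
    case False
    then have "K s l = 0" for l by (simp add: K_def)
    then show ?thesis by simp
  next
    case True
    define C where "C = (\<bar>A\<bar> + 1) * cmod (f s)"
    have ts: "t + s > 0" using t True by simp
    have ie: "integrable lborel (\<lambda>l. indicator {0<..} l * exp (- (t + s) * l))"
      using exp_laplace(1)[OF ts] by simp
    have "(\<integral>\<^sup>+ l. ennreal (norm (K s l)) \<partial>lborel) \<le> (\<integral>\<^sup>+ l. ennreal (C * (indicator {0<..} l * exp (- (t + s) * l))) \<partial>lborel)"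
    proof (intro nn_integral_mono ennreal_leI)
      fix l
      have "norm (K s l) \<le> indicator {0<..} s * ((\<bar>A\<bar> + 1) * cmod (f s)) * (indicator {0<..} l * exp (- (t + s) * l))"
        by (rule bound)
      then show "norm (K s l) \<le> C * (indicator {0<..} l * exp (- (t + s) * l))"
        using True by (simp add: C_def)
    qed
    also have "\<dots> = ennreal (\<integral> l. C * (indicator {0<..} l * exp (- (t + s) * l)) \<partial>lborel)"
      using ie by (intro nn_integral_eq_integral) (auto simp: C_def)
    also have "\<dots> = ennreal (C * (1 / (t + s)))"
      using exp_laplace(2)[OF ts] by simp
    also have "\<dots> \<le> ennreal ((\<bar>A\<bar> + 1) * (indicator {0<..} s * (cmod (f s))^2 + indicator {0<..} s * (1 / (t + s)^2)))"
    proof (rule ennreal_leI)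
      have "2 * cmod (f s) * (1 / (t + s)) \<le> (cmod (f s))^2 + (1 / (t + s))^2"
        by (rule sum_squares_bound)
      moreover have "0 \<le> cmod (f s) * (1 / (t + s))" using ts by simp
      ultimately have "cmod (f s) * (1 / (t + s)) \<le> (cmod (f s))^2 + 1 / (t + s)^2"
        by (simp add: power_divide)
      then show "C * (1 / (t + s)) \<le> (\<bar>A\<bar> + 1) * (indicator {0<..} s * (cmod (f s))^2 + indicator {0<..} s * (1 / (t + s)^2))"
      proof -
        have "(\<bar>A\<bar> + 1) * (cmod (f s) * (1 / (t + s))) \<le> (\<bar>A\<bar> + 1) * ((cmod (f s))^2 + 1 / (t + s)^2)"
          using \<open>cmod (f s) * (1 / (t + s)) \<le> (cmod (f s))^2 + 1 / (t + s)^2\<close>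
          by (rule mult_left_mono) simp
        then show ?thesis using True by (simp add: C_def)
      qed
    qed
    finally show ?thesis .
  qed
  have ig: "integrable lborel (\<lambda>s. (\<bar>A\<bar> + 1) * (indicator {0<..} s * (cmod (f s))^2 + indicator {0<..} s * (1 / (t + s)^2)))"
    using f2 inv_sq_integrable[OF t] by simp
  have "(\<integral>\<^sup>+ p. ennreal (norm (case_prod K p)) \<partial>(lborel \<Otimes>\<^sub>M lborel)) = (\<integral>\<^sup>+ s. \<integral>\<^sup>+ l. ennreal (norm (K s l)) \<partial>lborel \<partial>lborel)"
    using lborel.nn_integral_fst[of "\<lambda>p. ennreal (norm (case_prod K p))" lborel] Km by simp
  also have "\<dots> \<le> (\<integral>\<^sup>+ s. ennreal ((\<bar>A\<bar> + 1) * (indicator {0<..} s * (cmod (f s))^2 + indicator {0<..} s * (1 / (t + s)^2))) \<partial>lborel)"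
    by (intro nn_integral_mono inner)
  also have "\<dots> = ennreal (\<integral> s. (\<bar>A\<bar> + 1) * (indicator {0<..} s * (cmod (f s))^2 + indicator {0<..} s * (1 / (t + s)^2)) \<partial>lborel)"
    using ig by (intro nn_integral_eq_integral) auto
  also have "\<dots> < \<infinity>" by simp
  finally have Kint: "integrable (lborel \<Otimes>\<^sub>M lborel) (\<lambda>(s, l). K s l)"
    using Km by (simp add: integrable_iff_bounded)
  have inner_l: "(\<integral>l. K s l \<partial>lborel) = indicator {0<..} s *\<^sub>R (complex_of_real (H (t + s)) * f s)" for s
  proof (cases "s > 0")
    case False
    then show ?thesis by (simp add: K_def)
  next
    case True
    have ts: "t + s > 0" using t True by simp
    define g where "g l = indicator {0<..} l * (exp (- (t + s) * l) * (A + cos (\<omega> * ln l)))" for l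
    have Keq: "K s l = complex_of_real (g l) * f s" for l
      using True by (simp add: K_def \<sigma>_def g_def scaleR_conv_of_real)
    have "(\<integral>l. K s l \<partial>lborel) = (\<integral>l. complex_of_real (g l) * f s \<partial>lborel)"
      by (simp only: Keq)
    also have "\<dots> = (\<integral>l. complex_of_real (g l) \<partial>lborel) * f s"
      by (rule integral_mult_left_zero)
    also have "\<dots> = complex_of_real (\<integral>l. indicator {0<..} l * (exp (- (t + s) * l) * (A + cos (\<omega> * ln l))) \<partial>lborel) * f s"
      by (simp only: integral_complex_of_real g_def)
    also have "\<dots> = complex_of_real (H (t + s)) * f s"
      using kernel_repr(2)[OF ts, of A \<omega>] by (simp add: H_def)
    finally show ?thesis using True by simp
  qed
  have inner_s: "(\<integral>s. K s l \<partial>lborel) = indicator {0<..} l *\<^sub>R (complex_of_real (exp (- t * l)) * (complex_of_real (A + cos (\<omega> * ln l)) * F l))" for l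
  proof -
    have "K s l = (indicator {0<..} l *\<^sub>R complex_of_real (exp (- t * l) * \<sigma> l)) *
        (indicator {0<..} s *\<^sub>R (complex_of_real (exp (- l * s)) * f s))" for s
    proof -
      have "exp (- (t + s) * l) = exp (- t * l) * exp (- l * s)"
        by (simp add: exp_add[symmetric] algebra_simps)
      then show ?thesis by (simp add: K_def scaleR_conv_of_real mult_ac)
    qed
    then have "(\<integral>s. K s l \<partial>lborel) = (\<integral>s. (indicator {0<..} l *\<^sub>R complex_of_real (exp (- t * l) * \<sigma> l)) *
        (indicator {0<..} s *\<^sub>R (complex_of_real (exp (- l * s)) * f s)) \<partial>lborel)"
      by (simp only:)
    also have "\<dots> = (indicator {0<..} l *\<^sub>R complex_of_real (exp (- t * l) * \<sigma> l)) *
        (\<integral>s. indicator {0<..} s *\<^sub>R (complex_of_real (exp (- l * s)) * f s) \<partial>lborel)"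
      by (rule integral_mult_right_zero)
    also have "\<dots> = indicator {0<..} l *\<^sub>R (complex_of_real (exp (- t * l)) * (complex_of_real (A + cos (\<omega> * ln l)) * F l))"
      by (simp add: F_def \<sigma>_def set_lebesgue_integral_def scaleR_conv_of_real mult_ac)
    finally show ?thesis .
  qed
  show "set_integrable lborel {0<..} (\<lambda>l. complex_of_real (exp (- t * l)) * (complex_of_real (A + cos (\<omega> * ln l)) * F l))"
    using lborel_pair.integrable_snd[of K, OF Kint] unfolding set_integrable_def inner_s .
  have "(\<integral>l. \<integral>s. K s l \<partial>lborel \<partial>lborel) = (\<integral>s. \<integral>l. K s l \<partial>lborel \<partial>lborel)"
    by (rule lborel_pair.Fubini_integral[OF Kint])
  then show "(LINT l:{0<..}|lborel. complex_of_real (exp (- t * l)) * (complex_of_real (A + cos (\<omega> * ln l)) * F l))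
         = (LINT s:{0<..}|lborel. complex_of_real (H (t + s)) * f s)"
    unfolding inner_s inner_l set_lebesgue_integral_def .
qed

theorem theorem8p9:
  fixes T A :: real and f :: "real \<Rightarrow> complex"
  assumes "T > 0"
    and "L2_pos f"
    and "AE t in lborel. t > 0 \<longrightarrow> mh_hankel T A f t = 0"
  shows "AE t in lborel. t > 0 \<longrightarrow> f t = 0"
proof -
  define \<omega> where "\<omega> = mh_omega T"
  have \<omega>0: "\<omega> \<noteq> 0" using assms(1) by (simp add: \<omega>_def mh_omega_def)
  have fm: "f \<in> borel_measurable lborel" using assms(2) by (simp add: L2_pos_def)
  have f2: "integrable lborel (\<lambda>s. indicator {0<..} s * (cmod (f s))^2)"
    using assms(2) by (simp add: L2_pos_def set_integrable_def)
  define F where "F \<equiv> \<lambda>l. LINT s:{0<..}|lborel. complex_of_real (exp (- l * s)) * f s"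
  define u where "u \<equiv> \<lambda>l. complex_of_real (A + cos (\<omega> * ln l)) * F l"
  have hk: "mh_hankel T A f t = (LINT s:{0<..}|lborel. complex_of_real
      ((A + Re (Gamma (1 - \<i> * of_real \<omega>) * exp (\<i> * of_real (\<omega> * ln (t + s))))) / (t + s)) * f s)" for t
    unfolding mh_hankel_def mh_h_def mh_p_def \<omega>_def ..
  have fs1: "set_integrable lborel {0<..} (\<lambda>l. complex_of_real (exp (- t * l)) * u l)" if "t > 0" for t
    using fubini_step(1)[OF fm f2 that, of A \<omega>] unfolding u_def F_def .
  have fs2: "(LINT l:{0<..}|lborel. complex_of_real (exp (- t * l)) * u l) = mh_hankel T A f t" if "t > 0" for t
    using fubini_step(2)[OF fm f2 that, of A \<omega>] unfolding u_def F_def hk .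
  have step1: "(LINT l:{0<..}|lborel. complex_of_real (exp (- t0 * l)) * u l) = 0" if "t0 > 0" for t0
  proof (rule laplace_ae_point[OF fs1 _ that])
    show "AE t in lborel. t > 0 \<longrightarrow> (LINT s:{0<..}|lborel. complex_of_real (exp (- t * s)) * u s) = 0"
      using assms(3)
    proof (rule AE_mp, intro AE_I2 impI)
      fix t :: real assume h: "t > 0 \<longrightarrow> mh_hankel T A f t = 0" and t: "t > 0"
      show "(LINT s:{0<..}|lborel. complex_of_real (exp (- t * s)) * u s) = 0"
        using fs2[OF t] h t by simp
    qed
  qed
  have "AE l in lborel. l > 0 \<longrightarrow> u l = 0"
  proof (rule laplace_unique)
    fix n :: nat
    show "set_integrable lborel {0<..} (\<lambda>x. complex_of_real (exp (- (real n + 1) * x)) * u x)"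
      by (rule fs1) simp
    show "(LINT x:{0<..}|lborel. complex_of_real (exp (- (real n + 1) * x)) * u x) = 0"
      by (rule step1) simp
  qed
  moreover have "AE l in lborel. l > 0 \<longrightarrow> A + cos (\<omega> * ln l) \<noteq> 0"
    by (rule sigma_ae_nonzero[OF \<omega>0])
  ultimately have aeF: "AE l in lborel. l > 0 \<longrightarrow> F l = 0"
    by eventually_elim (auto simp: u_def simp flip: of_real_add)
  have fi: "set_integrable lborel {0<..} (\<lambda>s. complex_of_real (exp (- c * s)) * f s)" if "c > 0" for c
    by (rule L2_exp_integrable[OF fm f2 that])
  have step2: "F t0 = 0" if "t0 > 0" for t0
    unfolding F_def
  proof (rule laplace_ae_point[OF fi _ that])
    show "AE t in lborel. t > 0 \<longrightarrow> (LINT s:{0<..}|lborel. complex_of_real (exp (- t * s)) * f s) = 0"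
      using aeF by (simp add: F_def)
  qed
  show ?thesis
  proof (rule laplace_unique)
    fix n :: nat
    show "set_integrable lborel {0<..} (\<lambda>x. complex_of_real (exp (- (real n + 1) * x)) * f x)"
      by (rule fi) simp
    show "(LINT x:{0<..}|lborel. complex_of_real (exp (- (real n + 1) * x)) * f x) = 0"
    proof -
      have "F (real n + 1) = 0" by (rule step2) simp
      then show ?thesis unfolding F_def .
    qed
  qed
qed

end
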